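(* Let $f:[0,\infty)\to\mathbb{R}$ be differentiable, let $0<a<b<\infty$, and suppose $f'$ is Lebesgue integrable on $[a,b]$. Let $(\alpha,m)\in(0,1]^2$ and suppose $|f'|$ is $(\alpha,m)$-GA-convex on $[0,\max\{a^{1/m},b\}]$. Then \[ \biggl|\frac{b^2f(b)-a^2f(a)}{2}-\int_a^b xf(x)\,dx\biggr|\le\frac{\ln b-\ln a}{2}\Bigl\{m\bigl[L(a^3,b^3)-G(\alpha,3)\bigr]\bigl|f'(a^{1/m})\bigr|+G(\alpha,3)|f'(b)|\Bigr\}. \]
   Context: For $c>0$, $h:[0,c]\to\mathbb{R}$ and $(\alpha,m)\in(0,1]^2$, $h$ is called $(\alpha,m)$-GA-convex on $[0,c]$ if $h\bigl(x^\lambda y^{m(1-\lambda)}\bigr)\le\lambda^\alpha h(x)+m(1-\lambda^\alpha)h(y)$ for all $x,y\in[0,c]$ and all $\lambda\in[0,1]$ (with the convention $0^0=1$). For fixed $0<a<b$ and $\ell\ge0$, $\alpha>0$, set $G(\alpha,\ell)=\int_0^1 t^\alpha a^{\ell(1-t)}b^{\ell t}\,dt$. For $x,y>0$, $x\neq y$, the logarithmic mean is $L(x,y)=\frac{y-x}{\ln y-\ln x}$. *)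

theory Defs
  imports "HOL-Analysis.Analysis"
begin

text \<open>Real power with the convention 0^0 = 1 (Isabelle's powr has 0 powr 0 = 0).\<close>
definition gpow :: "real \<Rightarrow> real \<Rightarrow> real" where
  "gpow x t = (if t = 0 then 1 else x powr t)"

definition ga_convex :: "real \<Rightarrow> real \<Rightarrow> real \<Rightarrow> (real \<Rightarrow> real) \<Rightarrow> bool" where
  "ga_convex \<alpha> m c h \<longleftrightarrow>
     (\<forall>x\<in>{0..c}. \<forall>y\<in>{0..c}. \<forall>s\<in>{0..1}.
        h (gpow x s * gpow y (m * (1 - s)))
          \<le> gpow s \<alpha> * h x + m * (1 - gpow s \<alpha>) * h y)"

definition Gfun :: "real \<Rightarrow> real \<Rightarrow> real \<Rightarrow> real \<Rightarrow> real" where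
  "Gfun a b \<alpha> l = integral {0..1} (\<lambda>t. gpow t \<alpha> * a powr (l * (1 - t)) * b powr (l * t))"

definition logmean :: "real \<Rightarrow> real \<Rightarrow> real" where
  "logmean x y = (y - x) / (ln y - ln x)"

end

theory Submission
  imports Defs
begin

lemma gpow_pos: "x > 0 \<Longrightarrow> gpow x s = x powr s"
  by (simp add: gpow_def)

theorem corollary3p1:
  fixes f f' :: "real \<Rightarrow> real" and a b \<alpha> m :: real
  assumes deriv: "\<And>x. x \<ge> 0 \<Longrightarrow> (f has_real_derivative f' x) (at x within {0..})"
    and ab: "0 < a" "a < b"
    and int: "f' absolutely_integrable_on {a..b}"
    and alpha: "0 < \<alpha>" "\<alpha> \<le> 1"
    and m: "0 < m" "m \<le> 1"
    and conv: "ga_convex \<alpha> m (max (a powr (1/m)) b) (\<lambda>x. \<bar>f' x\<bar>)"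
  shows "\<bar>(b\<^sup>2 * f b - a\<^sup>2 * f a) / 2 - integral {a..b} (\<lambda>x. x * f x)\<bar>
    \<le> (ln b - ln a) / 2 *
       (m * (logmean (a ^ 3) (b ^ 3) - Gfun a b \<alpha> 3) * \<bar>f' (a powr (1/m))\<bar>
        + Gfun a b \<alpha> 3 * \<bar>f' b\<bar>)"
proof -
  define k where "k = ln b - ln a"
  have kpos: "k > 0" using ab by (simp add: k_def)
  define \<phi> where "\<phi> t = exp (ln a + t * k)" for t
  have phipos: "\<phi> t > 0" for t by (simp add: \<phi>_def)
  have phi0: "\<phi> 0 = a" using ab by (simp add: \<phi>_def)
  have phi1: "\<phi> 1 = b" using ab by (simp add: \<phi>_def k_def)
  have phiab: "\<phi> t \<in> {a..b}" if "t \<in> {0..1}" for t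
  proof -
    have "a = exp (ln a + 0 * k)" using ab by simp
    also have "\<dots> \<le> \<phi> t" unfolding \<phi>_def using that kpos by simp
    finally have 1: "a \<le> \<phi> t" .
    have "\<phi> t \<le> exp (ln a + 1 * k)" unfolding \<phi>_def using that kpos
      by (simp add: mult_right_le_one_le)
    also have "\<dots> = b" using ab by (simp add: k_def)
    finally show ?thesis using 1 by simp
  qed
  have dphi: "(\<phi> has_real_derivative \<phi> t * k) (at t)" for t
    unfolding \<phi>_def by (auto intro!: derivative_eq_intros)
  have dF: "(f has_real_derivative f' x) (at x)" if "x > 0" for x
  proof -
    have "(f has_real_derivative f' x) (at x within {0<..})"
      by (rule DERIV_subset[OF deriv[of x, OF less_imp_le[OF that]]]) auto
    moreover have "at x within {0<..} = at x"
      using that by (intro at_within_open) auto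
    ultimately show ?thesis by simp
  qed
  have contf: "continuous_on {a..b} f"
    using ab by (intro continuous_at_imp_continuous_on ballI DERIV_isCont[OF dF]) auto
  have contxf: "continuous_on {a..b} (\<lambda>x. x * f x)"
    by (intro continuous_intros contf)
  define I where "I y = integral {a..y} (\<lambda>x. x * f x)" for y
  define H where "H t = (\<phi> t)\<^sup>2 / 2 * f (\<phi> t) - I (\<phi> t)" for t
  define g where "g t = k / 2 * (\<phi> t) ^ 3 * f' (\<phi> t)" for t
  have dH: "(H has_vector_derivative g t) (at t within {0..1})" if t: "t \<in> {0..1}" for t
  proof -
    have dI: "(I has_vector_derivative (\<phi> t * f (\<phi> t))) (at (\<phi> t) within \<phi> ` {0..1})"
      unfolding I_def
      by (rule has_vector_derivative_within_subset[OF integral_has_vector_derivative[OF contxf phiab[OF t]]])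
        (use phiab in auto)
    have dIphi: "((I \<circ> \<phi>) has_vector_derivative ((\<phi> t * k) *\<^sub>R (\<phi> t * f (\<phi> t)))) (at t within {0..1})"
      by (rule vector_diff_chain_within[OF _ dI])
        (simp add: has_real_derivative_iff_has_vector_derivative[symmetric] has_field_derivative_at_within[OF dphi])
    have dIphi': "((\<lambda>t. I (\<phi> t)) has_real_derivative ((\<phi> t * k) * (\<phi> t * f (\<phi> t)))) (at t within {0..1})"
      using dIphi by (simp add: has_real_derivative_iff_has_vector_derivative o_def)
    have df: "((\<lambda>t. f (\<phi> t)) has_real_derivative f' (\<phi> t) * (\<phi> t * k)) (at t)"
      by (rule DERIV_chain2[OF dF[OF phipos] dphi])
    have dsq: "((\<lambda>x. x\<^sup>2 / 2) has_real_derivative y) (at y)" for y :: real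
      by (auto intro!: derivative_eq_intros)
    have d1: "((\<lambda>t. (\<phi> t)\<^sup>2 / 2) has_real_derivative \<phi> t * (\<phi> t * k)) (at t)"
      by (rule DERIV_chain2[OF dsq dphi])
    have "((\<lambda>t. (\<phi> t)\<^sup>2 / 2 * f (\<phi> t) - I (\<phi> t)) has_real_derivative
        \<phi> t * (\<phi> t * k) * f (\<phi> t) + f' (\<phi> t) * (\<phi> t * k) * ((\<phi> t)\<^sup>2 / 2)
         - (\<phi> t * k) * (\<phi> t * f (\<phi> t))) (at t within {0..1})"
      by (rule DERIV_diff[OF DERIV_mult[OF has_field_derivative_at_within[OF d1]
          has_field_derivative_at_within[OF df]] dIphi'])
    moreover have "\<phi> t * (\<phi> t * k) * f (\<phi> t) + f' (\<phi> t) * (\<phi> t * k) * ((\<phi> t)\<^sup>2 / 2)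
         - (\<phi> t * k) * (\<phi> t * f (\<phi> t)) = g t"
      by (simp add: g_def power2_eq_square power3_eq_cube algebra_simps)
    ultimately show ?thesis unfolding H_def
      by (simp add: has_real_derivative_iff_has_vector_derivative)
  qed
  have gint: "(g has_integral H 1 - H 0) {0..1}"
    by (rule fundamental_theorem_of_calculus) (use dH in auto)
  have lhs: "(b\<^sup>2 * f b - a\<^sup>2 * f a) / 2 - integral {a..b} (\<lambda>x. x * f x) = H 1 - H 0"
    by (simp add: H_def I_def phi0 phi1 field_simps)
  define A where "A = \<bar>f' (a powr (1/m))\<bar>"
  define B where "B = \<bar>f' b\<bar>"
  define P where "P t = gpow t \<alpha> * a powr (3 * (1 - t)) * b powr (3 * t)" for t
  define h where "h t = k / 2 * (B * P t + m * A * ((\<phi> t) ^ 3 - P t))" for t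
  have phi3: "a powr (3 * (1 - t)) * b powr (3 * t) = (\<phi> t) ^ 3" for t
  proof -
    have "a powr (3 * (1 - t)) * b powr (3 * t) = exp (3 * (1 - t) * ln a + 3 * t * ln b)"
      using ab by (simp add: powr_def exp_add)
    also have "\<dots> = exp (3 * (ln a + t * k))"
      by (simp add: k_def algebra_simps)
    also have "\<dots> = (\<phi> t) ^ 3"
      by (simp add: \<phi>_def exp_of_nat_mult[symmetric])
    finally show ?thesis .
  qed
  have Pon: "P t = t powr \<alpha> * (\<phi> t) ^ 3" if "t \<in> {0..1}" for t
    using alpha phi3[of t] by (simp add: P_def gpow_def)
  have contphi: "continuous_on {0..1} \<phi>"
    unfolding \<phi>_def by (intro continuous_intros)
  have contP: "continuous_on {0..1} P"
  proof -
    have "continuous_on {0..1} (\<lambda>t. t powr \<alpha> * (\<phi> t) ^ 3)"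
      by (intro continuous_intros continuous_on_powr' contphi) (use alpha in auto)
    thus ?thesis by (rule continuous_on_eq) (simp add: Pon)
  qed
  define G where "G = Gfun a b \<alpha> 3"
  have PG: "(P has_integral G) {0..1}"
    unfolding G_def Gfun_def P_def[symmetric]
    using integrable_continuous_real[OF contP[unfolded atLeastAtMost_iff]] contP
    by (simp add: integrable_continuous_interval has_integral_integral)
  define E where "E = (b ^ 3 - a ^ 3) / (3 * k)"
  have phi3int: "((\<lambda>t. (\<phi> t) ^ 3) has_integral E) {0..1}"
  proof -
    have "((\<lambda>t. (\<phi> t) ^ 3) has_integral ((\<phi> 1) ^ 3 / (3 * k) - (\<phi> 0) ^ 3 / (3 * k))) {0..1}"
    proof (rule fundamental_theorem_of_calculus)
      fix t :: real
      have dc: "((\<lambda>x. x ^ 3 / (3 * k)) has_real_derivative (3 * y ^ 2) / (3 * k)) (at y)" for y :: real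
        using kpos by (auto intro!: derivative_eq_intros)
      have "((\<lambda>t. (\<phi> t) ^ 3 / (3 * k)) has_real_derivative (3 * (\<phi> t) ^ 2) / (3 * k) * (\<phi> t * k)) (at t)"
        by (rule DERIV_chain2[OF dc dphi])
      moreover have "(3 * (\<phi> t) ^ 2) / (3 * k) * (\<phi> t * k) = (\<phi> t) ^ 3"
        using kpos by (simp add: power2_eq_square power3_eq_cube)
      ultimately show "((\<lambda>t. (\<phi> t) ^ 3 / (3 * k)) has_vector_derivative (\<phi> t) ^ 3) (at t within {0..1})"
        by (simp add: has_real_derivative_iff_has_vector_derivative[symmetric] has_field_derivative_at_within)
    qed simp
    thus ?thesis by (simp add: E_def phi0 phi1 diff_divide_distrib)
  qed
  have hint: "(h has_integral k / 2 * (B * G + m * A * (E - G))) {0..1}"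
    unfolding h_def
    by (intro has_integral_mult_right has_integral_add has_integral_diff PG phi3int)
  have bound: "norm (g t) \<le> h t" if t: "t \<in> {0..1}" for t
  proof -
    have mem1: "b \<in> {0..max (a powr (1/m)) b}" using ab by auto
    have mem2: "a powr (1/m) \<in> {0..max (a powr (1/m)) b}" by auto
    have c: "\<bar>f' (gpow b t * gpow (a powr (1/m)) (m * (1 - t)))\<bar>
          \<le> gpow t \<alpha> * B + m * (1 - gpow t \<alpha>) * A"
      using conv mem1 mem2 t unfolding ga_convex_def A_def B_def by blast
    have "gpow b t * gpow (a powr (1/m)) (m * (1 - t)) = b powr t * a powr (1 - t)"
      using ab m by (simp add: gpow_pos powr_powr)
    also have "\<dots> = \<phi> t"
      using ab by (simp add: powr_def \<phi>_def k_def exp_add[symmetric] algebra_simps)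
    finally have c': "\<bar>f' (\<phi> t)\<bar> \<le> t powr \<alpha> * B + m * (1 - t powr \<alpha>) * A"
      using c alpha by (simp add: gpow_def)
    have "norm (g t) = k / 2 * (\<phi> t) ^ 3 * \<bar>f' (\<phi> t)\<bar>"
      using kpos phipos[of t] by (simp add: g_def abs_mult)
    also have "\<dots> \<le> k / 2 * (\<phi> t) ^ 3 * (t powr \<alpha> * B + m * (1 - t powr \<alpha>) * A)"
      using kpos phipos[of t] c' by (intro mult_left_mono) auto
    also have "\<dots> = h t"
      using Pon[OF t] by (simp add: h_def algebra_simps)
    finally show ?thesis .
  qed
  have "norm (integral {0..1} g) \<le> integral {0..1} h"
    by (rule integral_norm_bound_integral) (use gint hint bound in auto)
  hence "\<bar>H 1 - H 0\<bar> \<le> k / 2 * (B * G + m * A * (E - G))"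
    using gint hint by (simp add: integral_unique)
  moreover have "logmean (a ^ 3) (b ^ 3) = E"
    using ab by (simp add: logmean_def E_def k_def ln_realpow algebra_simps)
  ultimately show ?thesis
    unfolding lhs by (simp add: k_def A_def B_def G_def algebra_simps)
qed

end
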